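(* Let $(X,d)$ be a compact metric space, $T:X\to X$ a homeomorphism with $F_n(T)<\infty$ for all $n\geqslant1$, and $G$ a finite group acting continuously on $X$ such that $g\circ T=T\circ g$ for all $g\in G$; let $(X',T')$ be the quotient system. Suppose there exists $\eta>0$ with $\limsup_{n\to\infty}\frac1n\log F_n(T)=\eta$. Then \[ \eta\leqslant\limsup_{n\to\infty}\frac1n\log F_n(T')\leqslant\nabla\eta . \]
   Context: The quotient system: $X'=G\backslash X=\{\mathfrak{O}_G(x):x\in X\}$ where $\mathfrak{O}_G(x)=\{g(x):g\in G\}$, with metric $d'(\mathfrak{O}_G(x),\mathfrak{O}_G(y))=\min\{d(x',y'):x'\in\mathfrak{O}_G(x),y'\in\mathfrak{O}_G(y)\}$, and $T'(\mathfrak{O}_G(x))=\mathfrak{O}_G(T(x))$. $F_n(S)=\#\{x:S^n(x)=x\}$. $\nabla=\max\{|\langle g\rangle|:g\in G\}$ is the largest order of an element of $G$. *)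

theory Defs
  imports "HOL-Analysis.Analysis" "HOL-Algebra.Group_Action" "HOL-Algebra.Multiplicative_Group"
          "HOL-Library.Extended_Real" "HOL-Library.Liminf_Limsup"
begin

definition fix_count :: "'b set \<Rightarrow> ('b \<Rightarrow> 'b) \<Rightarrow> nat \<Rightarrow> nat" where
  "fix_count A S n = card {x \<in> A. (S ^^ n) x = x}"

definition quot_space :: "_ \<Rightarrow> ('g \<Rightarrow> 'b \<Rightarrow> 'b) \<Rightarrow> 'b set \<Rightarrow> 'b set set" where
  "quot_space G \<phi> X = orbits G X \<phi>"

definition quot_map :: "_ \<Rightarrow> ('g \<Rightarrow> 'b \<Rightarrow> 'b) \<Rightarrow> ('b \<Rightarrow> 'b) \<Rightarrow> 'b set \<Rightarrow> 'b set" where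
  "quot_map G \<phi> T Orb = orbit G \<phi> (T (SOME x. x \<in> Orb))"

definition max_elem_order :: "_ \<Rightarrow> nat" where
  "max_elem_order G = Max (group.ord G ` carrier G)"

definition growth :: "(nat \<Rightarrow> nat) \<Rightarrow> ereal" where
  "growth F = limsup (\<lambda>n. ereal (ln (real (F n)) / real n))"

end

theory Submission imports Defs begin

lemma orbit_shift:
  assumes "group_action G X \<phi>" "g \<in> carrier G" "z \<in> X"
  shows "orbit G \<phi> (\<phi> g z) = orbit G \<phi> z"
proof -
  interpret group_action G X \<phi> by fact
  have gz: "\<phi> g z \<in> X" using element_image assms by blast
  have zin: "\<phi> g z \<in> orbit G \<phi> z" using assms unfolding orbit_def by blast
  have sub: "orbit G \<phi> w \<subseteq> X" if "w \<in> X" for w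
    using that element_image unfolding orbit_def by blast
  show ?thesis
  proof
    show "orbit G \<phi> (\<phi> g z) \<subseteq> orbit G \<phi> z"
      using orbit_trans[OF assms(3) gz] zin sub[OF gz] by blast
  next
    have "z \<in> orbit G \<phi> (\<phi> g z)" using orbit_sym[OF assms(3) gz zin] .
    then show "orbit G \<phi> z \<subseteq> orbit G \<phi> (\<phi> g z)"
      using orbit_trans[OF gz assms(3)] sub[OF assms(3)] by blast
  qed
qed

lemma funpow_in:
  assumes "\<And>x. x \<in> X \<Longrightarrow> T x \<in> X" "x \<in> X"
  shows "(T ^^ n) x \<in> X"
  using assms by (induction n) auto

lemma funpow_comm:
  assumes "\<And>x. x \<in> X \<Longrightarrow> T x \<in> X" "x \<in> X"
    and "\<And>x. x \<in> X \<Longrightarrow> \<phi> g (T x) = T (\<phi> g x)" "\<And>x. x \<in> X \<Longrightarrow> \<phi> g x \<in> X"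
  shows "(T ^^ n) (\<phi> g x) = \<phi> g ((T ^^ n) x)"
  using assms(2)
proof (induction n)
  case (Suc n)
  then show ?case using assms funpow_in[OF assms(1)] by simp
qed simp

lemma quot_map_orbit:
  assumes "group_action G X \<phi>" "\<And>x. x \<in> X \<Longrightarrow> T x \<in> X"
    and "\<And>g x. g \<in> carrier G \<Longrightarrow> x \<in> X \<Longrightarrow> \<phi> g (T x) = T (\<phi> g x)"
    and "x \<in> X"
  shows "quot_map G \<phi> T (orbit G \<phi> x) = orbit G \<phi> (T x)"
proof -
  interpret group_action G X \<phi> by fact
  define y where "y = (SOME y. y \<in> orbit G \<phi> x)"
  have "y \<in> orbit G \<phi> x" unfolding y_def using orbit_refl[OF assms(4)] by (rule someI)
  then obtain g where g: "g \<in> carrier G" "y = \<phi> g x" unfolding orbit_def by blast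
  have "quot_map G \<phi> T (orbit G \<phi> x) = orbit G \<phi> (T y)"
    unfolding quot_map_def y_def ..
  also have "\<dots> = orbit G \<phi> (\<phi> g (T x))" using g assms by simp
  also have "\<dots> = orbit G \<phi> (T x)" using orbit_shift[OF assms(1) g(1) assms(2)[OF assms(4)]] .
  finally show ?thesis .
qed

lemma quot_map_pow_orbit:
  assumes "group_action G X \<phi>" "\<And>x. x \<in> X \<Longrightarrow> T x \<in> X"
    and "\<And>g x. g \<in> carrier G \<Longrightarrow> x \<in> X \<Longrightarrow> \<phi> g (T x) = T (\<phi> g x)"
    and "x \<in> X"
  shows "(quot_map G \<phi> T ^^ n) (orbit G \<phi> x) = orbit G \<phi> ((T ^^ n) x)"
proof (induction n)
  case 0 show ?case by simp
next
  case (Suc n)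
  have "(quot_map G \<phi> T ^^ Suc n) (orbit G \<phi> x) = quot_map G \<phi> T (orbit G \<phi> ((T ^^ n) x))"
    using Suc by simp
  also have "\<dots> = orbit G \<phi> (T ((T ^^ n) x))"
    using quot_map_orbit[of G X \<phi> T "(T ^^ n) x"] assms funpow_in[of X T x n] by blast
  finally show ?case by simp
qed

lemma pow_iter:
  assumes "group_action G X \<phi>" "\<And>x. x \<in> X \<Longrightarrow> T x \<in> X"
    and "\<And>g x. g \<in> carrier G \<Longrightarrow> x \<in> X \<Longrightarrow> \<phi> g (T x) = T (\<phi> g x)"
    and "x \<in> X" "g \<in> carrier G" "(T ^^ n) x = \<phi> g x"
  shows "(T ^^ (n * m)) x = \<phi> (g [^]\<^bsub>G\<^esub> m) x"
proof (induction m)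
  interpret group_action G X \<phi> by fact
  case 0
  have "\<phi> \<one>\<^bsub>G\<^esub> x = x" using id_eq_one assms(4) by (metis restrict_apply')
  then show ?case by simp
next
  interpret group_action G X \<phi> by fact
  interpret group G using group_hom group_hom.axioms(1) by blast
  case (Suc m)
  have el: "\<And>h y. h \<in> carrier G \<Longrightarrow> y \<in> X \<Longrightarrow> \<phi> h y \<in> X" using element_image by blast
  have "(T ^^ (n * Suc m)) x = (T ^^ (n * m)) ((T ^^ n) x)"
    by (metis funpow_add comp_apply mult_Suc_right add.commute)
  also have "\<dots> = (T ^^ (n*m)) (\<phi> g x)" using assms by simp
  also have "\<dots> = \<phi> g ((T ^^ (n*m)) x)"
    using funpow_comm[of X T x \<phi> g "n*m"] assms el by blast
  also have "\<dots> = \<phi> g (\<phi> (g [^]\<^bsub>G\<^esub> m) x)" using Suc by simp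
  also have "\<dots> = \<phi> (g \<otimes>\<^bsub>G\<^esub> g [^]\<^bsub>G\<^esub> m) x" using composition_rule assms by simp
  also have "g \<otimes>\<^bsub>G\<^esub> g [^]\<^bsub>G\<^esub> m = g [^]\<^bsub>G\<^esub> Suc m" using assms(5) nat_pow_Suc2 by simp
  finally show ?case .
qed


lemma ord_facts:
  assumes "group G" "finite (carrier G)" "g \<in> carrier G"
  shows "group.ord G g > 0" "group.ord G g \<le> max_elem_order G"
    "g [^]\<^bsub>G\<^esub> (group.ord G g) = \<one>\<^bsub>G\<^esub>"
proof -
  interpret group G by fact
  have "finite (carrier (subgroup_generated G {g}))"
    using carrier_subgroup_generated_subset assms(2) finite_subset by blast
  then show "group.ord G g > 0" using finite_cyclic_subgroup_order assms(3) by blast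
  show "group.ord G g \<le> max_elem_order G" unfolding max_elem_order_def
    using assms by (intro Max_ge) auto
  show "g [^]\<^bsub>G\<^esub> group.ord G g = \<one>\<^bsub>G\<^esub>" using assms by simp
qed

lemma counts:
  assumes ga: "group_action G X \<phi>" and grp: "group G" and fin: "finite (carrier G)"
    and TX: "\<And>x. x \<in> X \<Longrightarrow> T x \<in> X"
    and comm: "\<And>g x. g \<in> carrier G \<Longrightarrow> x \<in> X \<Longrightarrow> \<phi> g (T x) = T (\<phi> g x)"
    and finF: "\<And>n. n \<ge> 1 \<Longrightarrow> finite {x \<in> X. (T ^^ n) x = x}"
    and n: "n \<ge> 1"
  shows "fix_count (quot_space G \<phi> X) (quot_map G \<phi> T) n
           \<le> (\<Sum>k\<in>{1..max_elem_order G}. fix_count X T (n*k))"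
    and "fix_count X T n \<le> card (carrier G) * fix_count (quot_space G \<phi> X) (quot_map G \<phi> T) n"
proof -
  interpret group_action G X \<phi> by fact
  define F where "F m = {x \<in> X. (T ^^ m) x = x}" for m
  define N where "N = max_elem_order G"
  define QF where "QF = {Ob \<in> orbits G X \<phi>. (quot_map G \<phi> T ^^ n) Ob = Ob}"
  have QFc: "fix_count (quot_space G \<phi> X) (quot_map G \<phi> T) n = card QF"
    unfolding fix_count_def quot_space_def QF_def ..
  have Fc: "fix_count X T m = card (F m)" for m unfolding fix_count_def F_def ..
  have el: "\<And>h y. h \<in> carrier G \<Longrightarrow> y \<in> X \<Longrightarrow> \<phi> h y \<in> X" using element_image by blast
  have QF_sub: "QF \<subseteq> orbit G \<phi> ` (\<Union>k\<in>{1..N}. F (n*k))"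
  proof
    fix Ob assume "Ob \<in> QF"
    then obtain x where x: "x \<in> X" "Ob = orbit G \<phi> x" and fx: "(quot_map G \<phi> T ^^ n) Ob = Ob"
      unfolding QF_def orbits_def by blast
    have Tnx: "(T ^^ n) x \<in> X" using funpow_in[of X T x n] TX x by blast
    have "orbit G \<phi> ((T ^^ n) x) = orbit G \<phi> x"
      using quot_map_pow_orbit[of G X \<phi> T x n] ga TX comm x fx by simp
    moreover have "(T ^^ n) x \<in> orbit G \<phi> ((T ^^ n) x)" using orbit_refl Tnx by blast
    ultimately obtain g where g: "g \<in> carrier G" "(T ^^ n) x = \<phi> g x"
      unfolding orbit_def by auto
    define k where "k = group.ord G g"
    have k: "k > 0" "k \<le> N" "g [^]\<^bsub>G\<^esub> k = \<one>\<^bsub>G\<^esub>"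
      using ord_facts[OF grp fin g(1)] unfolding k_def N_def by auto
    have "(T ^^ (n * k)) x = \<phi> (g [^]\<^bsub>G\<^esub> k) x"
      using pow_iter[of G X \<phi> T x g n k] ga TX comm x g by blast
    also have "\<dots> = x" using k(3) id_eq_one x(1) by (metis restrict_apply')
    finally have "x \<in> F (n*k)" unfolding F_def using x by blast
    then show "Ob \<in> orbit G \<phi> ` (\<Union>k\<in>{1..N}. F (n*k))" using k x by force
  qed
  have finU: "finite (\<Union>k\<in>{1..N}. F (n*k))"
    using finF n unfolding F_def by (intro finite_UN_I) auto
  have finQF: "finite QF" using QF_sub finU finite_subset by blast
  have "card QF \<le> card (orbit G \<phi> ` (\<Union>k\<in>{1..N}. F (n*k)))"
    using QF_sub finU by (intro card_mono) auto
  also have "\<dots> \<le> card (\<Union>k\<in>{1..N}. F (n*k))" using finU card_image_le by blast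
  also have "\<dots> \<le> (\<Sum>k\<in>{1..N}. card (F (n*k)))" by (rule card_UN_le) simp
  finally show "fix_count (quot_space G \<phi> X) (quot_map G \<phi> T) n
           \<le> (\<Sum>k\<in>{1..max_elem_order G}. fix_count X T (n*k))"
    unfolding QFc Fc N_def .
  have orbc: "card (orbit G \<phi> x) \<le> card (carrier G)" for x
  proof -
    have "orbit G \<phi> x = (\<lambda>g. \<phi> g x) ` carrier G" unfolding orbit_def by blast
    then show ?thesis using card_image_le fin by simp
  qed
  have "F n \<subseteq> \<Union>(orbit G \<phi> ` F n)" using orbit_refl unfolding F_def by blast
  moreover have "orbit G \<phi> ` F n \<subseteq> QF"
  proof
    fix Ob assume "Ob \<in> orbit G \<phi> ` F n"
    then obtain x where x: "x \<in> X" "(T ^^ n) x = x" "Ob = orbit G \<phi> x" unfolding F_def by blast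
    have "(quot_map G \<phi> T ^^ n) Ob = Ob"
      using quot_map_pow_orbit[of G X \<phi> T x n] ga TX comm x by simp
    then show "Ob \<in> QF" unfolding QF_def orbits_def using x by blast
  qed
  moreover have "finite (F n)" using finF n unfolding F_def by blast
  ultimately have "card (F n) \<le> card (\<Union>(orbit G \<phi> ` F n))"
    by (intro card_mono) (auto simp: orbit_def fin)
  also have "\<dots> \<le> sum card (orbit G \<phi> ` F n)" by (rule card_Union_le_sum_card)
  also have "\<dots> \<le> card (orbit G \<phi> ` F n) * card (carrier G)"
    using sum_bounded_above[of "orbit G \<phi> ` F n" card "card (carrier G)"] orbc by fastforce
  also have "\<dots> \<le> card QF * card (carrier G)"
    using \<open>orbit G \<phi> ` F n \<subseteq> QF\<close> finQF by (intro mult_right_mono card_mono) auto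
  finally show "fix_count X T n \<le> card (carrier G) * fix_count (quot_space G \<phi> X) (quot_map G \<phi> T) n"
    unfolding QFc Fc by (simp add: mult.commute)
qed


lemma eventually_small_over_n:
  fixes C e :: real assumes "e > 0"
  shows "\<exists>M. \<forall>n\<ge>M. C / real n < e"
proof -
  have "((\<lambda>n. C / of_nat n) \<longlongrightarrow> (0::real)) sequentially" by (rule lim_const_over_n)
  then have "eventually (\<lambda>n. C / real n < e) sequentially"
    using assms by (rule order_tendstoD(2))
  then show ?thesis unfolding eventually_sequentially .
qed

lemma ln_nat_nonneg: "ln (real (m::nat)) \<ge> 0"
  by (cases "m = 0") auto

lemma analysis_upper:
  fixes f q :: "nat \<Rightarrow> nat" and N :: nat and \<eta> :: real
  assumes N: "N \<ge> 1" and eta: "\<eta> > 0" and gr: "growth f = ereal \<eta>"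
    and bound: "\<And>n. n \<ge> 1 \<Longrightarrow> q n \<le> (\<Sum>k\<in>{1..N}. f (n*k))"
  shows "growth q \<le> ereal (real N * \<eta>)"
  unfolding growth_def Limsup_le_iff
proof (intro allI impI)
  fix y :: ereal assume y: "y > ereal (real N * \<eta>)"
  obtain r where r: "real N * \<eta> < r" "ereal r \<le> y"
  proof (cases y)
    case (real r) then show ?thesis using y that by auto
  next
    case PInf then show ?thesis using that[of "real N * \<eta> + 1"] by auto
  next
    case MInf then show ?thesis using y by auto
  qed
  define e where "e = (r - real N * \<eta>) / (2 * real N)"
  have Npos: "real N > 0" using N by simp
  have e: "e > 0" unfolding e_def using r Npos by auto
  have eN: "real N * e = (r - real N * \<eta>) / 2" unfolding e_def using Npos by (simp add: field_simps)
  have "ereal (\<eta> + e) > limsup (\<lambda>n. ereal (ln (real (f n)) / real n))"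
    using gr e unfolding growth_def by simp
  then have "eventually (\<lambda>n. ereal (ln (real (f n)) / real n) < ereal (\<eta> + e)) sequentially"
    by (rule Limsup_lessD)
  then obtain M where M: "\<And>n. n \<ge> M \<Longrightarrow> ln (real (f n)) / real n < \<eta> + e"
    unfolding eventually_sequentially by auto
  obtain M' where M': "\<And>n. n \<ge> M' \<Longrightarrow> ln (real N) / real n < (r - real N * \<eta>) / 2"
    using eventually_small_over_n[of "(r - real N * \<eta>) / 2" "ln (real N)"] r by auto
  show "eventually (\<lambda>n. y > ereal (ln (real (q n)) / real n)) sequentially"
    unfolding eventually_sequentially
  proof (intro exI[of _ "max (max M M') 1"] allI impI)
    fix n assume nM: "n \<ge> max (max M M') 1"
    have n1: "n \<ge> 1" and npos: "real n > 0" using nM by auto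
    define E where "E = exp (real n * real N * (\<eta> + e))"
    have fk: "real (f (n*k)) \<le> E" if k: "k \<in> {1..N}" for k
    proof (cases "f (n*k) = 0")
      case True then show ?thesis unfolding E_def by simp
    next
      case False
      have nk: "n * k \<ge> M" using k nM by (metis atLeastAtMost_iff dual_order.trans le_square max.bounded_iff mult_le_mono2 mult.commute mult_1_right)
      have nkpos: "real (n*k) > 0" using k n1 by auto
      have "ln (real (f (n*k))) < real (n*k) * (\<eta> + e)"
        using M[OF nk] nkpos by (simp add: divide_less_eq mult.commute)
      then have "real (f (n*k)) < exp (real (n*k) * (\<eta> + e))"
        using False by (metis exp_less_cancel_iff exp_ln of_nat_0_less_iff not_gr_zero)
      also have "\<dots> \<le> E" unfolding E_def using k eta e npos
        by (intro exp_le_cancel_iff[THEN iffD2]) (auto intro!: mult_right_mono simp: mult_left_mono)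
      finally show ?thesis by simp
    qed
    have "real (q n) \<le> (\<Sum>k\<in>{1..N}. real (f (n*k)))"
      using bound[OF n1] by (metis of_nat_le_iff of_nat_sum)
    also have "\<dots> \<le> real N * E" using sum_bounded_above[of "{1..N}" "\<lambda>k. real (f (n*k))" E] fk by simp
    finally have qle: "real (q n) \<le> real N * E" .
    have lnq: "ln (real (q n)) \<le> ln (real N) + real n * real N * (\<eta> + e)"
    proof (cases "q n = 0")
      case True
      have "0 \<le> ln (real N)" using ln_nat_nonneg .
      moreover have "0 \<le> real n * real N * (\<eta> + e)" using eta e by simp
      ultimately show ?thesis using True by simp
    next
      case False
      have "ln (real (q n)) \<le> ln (real N * E)" using False qle Npos by (subst ln_le_cancel_iff) (auto simp: E_def)
      also have "\<dots> = ln (real N) + real n * real N * (\<eta> + e)" using Npos by (simp add: ln_mult E_def)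
      finally show ?thesis .
    qed
    have "ln (real (q n)) / real n \<le> ln (real N) / real n + real N * (\<eta> + e)"
    proof -
      have "ln (real (q n)) / real n \<le> (ln (real N) + real n * real N * (\<eta> + e)) / real n"
        using lnq npos by (intro divide_right_mono) auto
      also have "\<dots> = ln (real N) / real n + real N * (\<eta> + e)"
        using npos by (simp add: add_divide_distrib)
      finally show ?thesis .
    qed
    also have "\<dots> < (r - real N * \<eta>) / 2 + real N * \<eta> + real N * e"
      using M'[of n] nM by (simp add: distrib_left)
    also have "\<dots> = r" using eN by (simp add: field_simps)
    finally have "ereal (ln (real (q n)) / real n) < ereal r" by simp
    then show "y > ereal (ln (real (q n)) / real n)" using r(2) by (rule less_le_trans)
  qed
qed

lemma analysis_lower:
  fixes f q :: "nat \<Rightarrow> nat" and c :: nat and \<eta> :: real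
  assumes c: "c \<ge> 1" and eta: "\<eta> > 0" and gr: "growth f = ereal \<eta>"
    and bound: "\<And>n. n \<ge> 1 \<Longrightarrow> f n \<le> c * q n"
  shows "ereal \<eta> \<le> growth q"
proof (rule ccontr)
  assume "\<not> ereal \<eta> \<le> growth q"
  then have "growth q < ereal \<eta>" by simp
  then obtain r where r: "growth q < ereal r" "ereal r < ereal \<eta>" using ereal_dense2 by blast
  define s where "s = max r (\<eta>/2)"
  have s: "growth q < ereal s" "s < \<eta>" "s > 0" using r eta unfolding s_def by (auto simp: less_le_trans)
  have "eventually (\<lambda>n. ereal (ln (real (q n)) / real n) < ereal s) sequentially"
    using s(1) unfolding growth_def by (rule Limsup_lessD)
  then obtain M where M: "\<And>n. n \<ge> M \<Longrightarrow> ln (real (q n)) / real n < s"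
    unfolding eventually_sequentially by auto
  obtain M' where M': "\<And>n. n \<ge> M' \<Longrightarrow> ln (real c) / real n < (\<eta> - s) / 2"
    using eventually_small_over_n[of "(\<eta> - s) / 2" "ln (real c)"] s by auto
  define t where "t = (\<eta> + s) / 2"
  have t: "t < \<eta>" "t > 0" using s unfolding t_def by auto
  have an: "ln (real (f n)) / real n \<le> t" if nM: "n \<ge> max (max M M') 1" for n
  proof (cases "f n = 0")
    case True then show ?thesis using t by simp
  next
    case False
    have n1: "n \<ge> 1" and npos: "real n > 0" using nM by auto
    have fle: "real (f n) \<le> real c * real (q n)" using bound[OF n1] by (metis of_nat_le_iff of_nat_mult)
    then have qpos: "q n > 0" using False by (metis gr0I mult_zero_right of_nat_0 of_nat_le_0_iff)
    have "ln (real (f n)) \<le> ln (real c * real (q n))" using fle False qpos c by (subst ln_le_cancel_iff) auto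
    also have "\<dots> = ln (real c) + ln (real (q n))" using qpos c by (simp add: ln_mult)
    finally have "ln (real (f n)) / real n \<le> ln (real c) / real n + ln (real (q n)) / real n"
      using npos by (simp add: divide_right_mono add_divide_distrib[symmetric])
    also have "\<dots> < (\<eta> - s) / 2 + s"
    proof -
      have h1: "ln (real (q n)) / real n < s" by (rule M) (use nM in auto)
      have h2: "ln (real c) / real n < (\<eta> - s) / 2" by (rule M') (use nM in auto)
      show ?thesis using h1 h2 by linarith
    qed
    also have "\<dots> = t" unfolding t_def by (simp add: field_simps)
    finally show ?thesis by simp
  qed
  have "growth f \<le> ereal t" unfolding growth_def Limsup_le_iff
  proof (intro allI impI)
    fix y :: ereal assume "y > ereal t"
    then show "eventually (\<lambda>n. y > ereal (ln (real (f n)) / real n)) sequentially"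
      unfolding eventually_sequentially using an by (meson ereal_less_eq(3) le_less_trans)
  qed
  then show False using gr t by simp
qed

theorem corollary9:
  fixes X :: "'b::metric_space set" and T Tinv :: "'b \<Rightarrow> 'b"
    and G :: "('g, 'm) monoid_scheme" and \<phi> :: "'g \<Rightarrow> 'b \<Rightarrow> 'b" and \<eta> :: real
  assumes "compact X"
    and "homeomorphism X X T Tinv"
    and "\<And>n. n \<ge> 1 \<Longrightarrow> finite {x \<in> X. (T ^^ n) x = x}"
    and "group G" and "finite (carrier G)"
    and "group_action G X \<phi>"
    and "\<And>g. g \<in> carrier G \<Longrightarrow> continuous_on X (\<phi> g)"
    and "\<And>g x. g \<in> carrier G \<Longrightarrow> x \<in> X \<Longrightarrow> \<phi> g (T x) = T (\<phi> g x)"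
    and "\<eta> > 0"
    and "growth (fix_count X T) = ereal \<eta>"
  shows "ereal \<eta> \<le> growth (fix_count (quot_space G \<phi> X) (quot_map G \<phi> T))
       \<and> growth (fix_count (quot_space G \<phi> X) (quot_map G \<phi> T))
           \<le> ereal (real (max_elem_order G) * \<eta>)"
proof -
  interpret grp: group G by fact
  have TX: "\<And>x. x \<in> X \<Longrightarrow> T x \<in> X" using assms(2) unfolding homeomorphism_def by blast
  have "group.ord G \<one>\<^bsub>G\<^esub> > 0" "group.ord G \<one>\<^bsub>G\<^esub> \<le> max_elem_order G"
    using ord_facts[OF assms(4,5) grp.one_closed] by auto
  then have N: "max_elem_order G \<ge> 1" by linarith
  have c: "card (carrier G) \<ge> 1" using assms(5) grp.one_closed
    by (metis One_nat_def Suc_leI card_gt_0_iff empty_iff)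
  note cnt = counts[OF assms(6,4,5) TX assms(8,3)]
  show ?thesis
  proof
    show "ereal \<eta> \<le> growth (fix_count (quot_space G \<phi> X) (quot_map G \<phi> T))"
      by (rule analysis_lower[OF c assms(9,10)]) (rule cnt(2))
    show "growth (fix_count (quot_space G \<phi> X) (quot_map G \<phi> T)) \<le> ereal (real (max_elem_order G) * \<eta>)"
      by (rule analysis_upper[OF N assms(9,10)]) (rule cnt(1))
  qed
qed

end
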